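(* Let $\widehat{\mathcal T}_\bullet$ be an arbitrary hierarchical mesh. Then $\Pi_\bullet(\widehat T)\subseteq\mathcal N_\bullet(\widehat T)$ for all $\widehat T\in\widehat{\mathcal T}_\bullet$, where $\Pi_\bullet(\widehat T)=\{\widehat T'\in\widehat{\mathcal T}_\bullet:\widehat T'\cap\widehat T\ne\emptyset\}$.
   Context: Parameter domain $\widehat\Omega=(0,1)^d$, $d\ge2$; degrees $p_1,\dots,p_d\ge1$. For each $i$, $\widehat{\mathcal K}^0_i$ is a $p_i$-open knot vector in $[0,1]$ (first $p_i+1$ knots $0$, last $p_i+1$ knots $1$, interior multiplicities $\le p_i$); $\widehat{\mathcal K}^{k+1}_i$ arises from $\widehat{\mathcal K}^k_i$ by inserting each nondegenerate span's midpoint once. $\widehat{\mathcal B}^k$: tensor-product B-splines of degree $(p_1,\dots,p_d)$ for $\widehat{\mathcal K}^k$; $\widehat{\mathcal T}^k$: closed cells of level $k$. A hierarchical mesh is given by closed sets $[0,1]^d=\widehat\Omega^0_\bullet\supseteq\widehat\Omega^1_\bullet\supseteq\cdots$, each $\widehat\Omega^k_\bullet$ ($k\ge1$) a union of cells of $\widehat{\mathcal T}^{k-1}$, eventually empty; mesh $\widehat{\mathcal T}_\bullet=\bigcup_k\{\widehat T\in\widehat{\mathcal T}^k:\widehat T\subseteq\widehat\Omega^k_\bullet,\widehat T\not\subseteq\widehat\Omega^{k+1}_\bullet\}$; hierarchical basis $\widehat{\mathcal H}_\bullet=\bigcup_k\{\widehat\beta\in\widehat{\mathcal B}^k:{\rm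 supp}\,\widehat\beta\subseteq\widehat\Omega^k_\bullet,{\rm supp}\,\widehat\beta\not\subseteq\widehat\Omega^{k+1}_\bullet\}$. Neighbors $\mathcal N_\bullet(\widehat T)=\{\widehat T'\in\widehat{\mathcal T}_\bullet:\exists\widehat\beta\in\widehat{\mathcal H}_\bullet,\ \widehat T,\widehat T'\subseteq{\rm supp}\,\widehat\beta\}$. *)

theory Defs
  imports "HOL-Analysis.Analysis"
begin

definition open_knot_vector :: "nat \<Rightarrow> real list \<Rightarrow> bool" where
  "open_knot_vector p t \<longleftrightarrow>
     sorted t \<and> set t \<subseteq> {0..1} \<and>
     count_list t 0 = p + 1 \<and> count_list t 1 = p + 1 \<and>
     (\<forall>x\<in>{0<..<1}. count_list t x \<le> p)"

definition refine_knots :: "real list \<Rightarrow> real list" where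
  "refine_knots t =
     sort (t @ map (\<lambda>(a, b). (a + b) / 2) (filter (\<lambda>(a, b). a < b) (zip t (tl t))))"

text \<open>Cox--de Boor recursion (with the convention 0/0 = 0, built into HOL's division).
  bspl t p j is the j-th B-spline of degree p for the knot vector t.\<close>
fun bspl :: "real list \<Rightarrow> nat \<Rightarrow> nat \<Rightarrow> real \<Rightarrow> real" where
  "bspl t 0 j x = (if t ! j \<le> x \<and> x < t ! (j + 1) then 1 else 0)"
| "bspl t (Suc q) j x =
     (x - t ! j) / (t ! (j + q + 1) - t ! j) * bspl t q j x
   + (t ! (j + q + 2) - x) / (t ! (j + q + 2) - t ! (j + 1)) * bspl t q (j + 1) x"

definition knots :: "('n \<Rightarrow> real list) \<Rightarrow> nat \<Rightarrow> 'n \<Rightarrow> real list" where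
  "knots K0 k i = (refine_knots ^^ k) (K0 i)"

definition bsplines :: "('n::finite \<Rightarrow> nat) \<Rightarrow> ('n \<Rightarrow> real list) \<Rightarrow> nat
     \<Rightarrow> (real^'n \<Rightarrow> real) set" where
  "bsplines p K0 k =
     {\<beta>. \<exists>j :: 'n \<Rightarrow> nat. (\<forall>i. j i + p i + 1 < length (knots K0 k i)) \<and>
          \<beta> = (\<lambda>x. \<Prod>i\<in>UNIV. bspl (knots K0 k i) (p i) (j i) (x $ i))}"

definition supp :: "(real^'n \<Rightarrow> real) \<Rightarrow> (real^'n) set" where
  "supp f = closure {x. f x \<noteq> 0}"

definition cells :: "('n::finite \<Rightarrow> real list) \<Rightarrow> nat \<Rightarrow> (real^'n) set set" where
  "cells K0 k =
     {cbox a b | a b. \<forall>i. \<exists>m. m + 1 < length (knots K0 k i) \<and>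
          a $ i = knots K0 k i ! m \<and> b $ i = knots K0 k i ! (m + 1) \<and> a $ i < b $ i}"

definition hier_domains :: "('n::finite \<Rightarrow> real list) \<Rightarrow> (nat \<Rightarrow> (real^'n) set) \<Rightarrow> bool" where
  "hier_domains K0 \<Omega> \<longleftrightarrow>
     \<Omega> 0 = cbox 0 1 \<and>
     (\<forall>k. \<Omega> (Suc k) \<subseteq> \<Omega> k) \<and>
     (\<forall>k. \<exists>S \<subseteq> cells K0 k. \<Omega> (Suc k) = \<Union>S) \<and>
     (\<exists>N. \<forall>k\<ge>N. \<Omega> k = {})"

definition hmesh :: "('n::finite \<Rightarrow> real list) \<Rightarrow> (nat \<Rightarrow> (real^'n) set) \<Rightarrow> (real^'n) set set" where
  "hmesh K0 \<Omega> = (\<Union>k. {T \<in> cells K0 k. T \<subseteq> \<Omega> k \<and> \<not> T \<subseteq> \<Omega> (Suc k)})"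

definition hbasis :: "('n::finite \<Rightarrow> nat) \<Rightarrow> ('n \<Rightarrow> real list) \<Rightarrow> (nat \<Rightarrow> (real^'n) set)
     \<Rightarrow> (real^'n \<Rightarrow> real) set" where
  "hbasis p K0 \<Omega> =
     (\<Union>k. {\<beta> \<in> bsplines p K0 k. supp \<beta> \<subseteq> \<Omega> k \<and> \<not> supp \<beta> \<subseteq> \<Omega> (Suc k)})"

definition neighbors :: "('n::finite \<Rightarrow> nat) \<Rightarrow> ('n \<Rightarrow> real list) \<Rightarrow> (nat \<Rightarrow> (real^'n) set)
     \<Rightarrow> (real^'n) set \<Rightarrow> (real^'n) set set" where
  "neighbors p K0 \<Omega> T =
     {T' \<in> hmesh K0 \<Omega>. \<exists>\<beta>\<in>hbasis p K0 \<Omega>. T \<subseteq> supp \<beta> \<and> T' \<subseteq> supp \<beta>}"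

definition touching :: "('n::finite \<Rightarrow> real list) \<Rightarrow> (nat \<Rightarrow> (real^'n) set)
     \<Rightarrow> (real^'n) set \<Rightarrow> (real^'n) set set" where
  "touching K0 \<Omega> T = {T' \<in> hmesh K0 \<Omega>. T' \<inter> T \<noteq> {}}"

end

theory Submission
  imports Defs
begin

definition mids :: "real list \<Rightarrow> real list" where
  "mids t = map (\<lambda>(a,b). (a+b)/2) (filter (\<lambda>(a,b). a<b) (zip t (tl t)))"

lemma refine_eq: "refine_knots t = sort (t @ mids t)"
  by (simp add: refine_knots_def mids_def)

lemma mids_mem:
  assumes "z \<in> set (mids t)"
  shows "\<exists>i. Suc i < length t \<and> t!i < t!Suc i \<and> z = (t!i + t!Suc i)/2"
proof -
  obtain a b where ab: "(a,b) \<in> set (zip t (tl t))" "a < b" "z = (a+b)/2"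
    using assms unfolding mids_def by auto
  then obtain i where "i < min (length t) (length (tl t))" "a = t!i" "b = tl t ! i"
    by (auto simp: set_zip)
  then have "Suc i < length t \<and> t!i < t!Suc i \<and> z = (t!i + t!Suc i)/2"
    using ab by (auto simp: nth_tl)
  then show ?thesis by blast
qed

lemma mids_notin:
  assumes "sorted t" "z \<in> set (mids t)" shows "z \<notin> set t"
proof
  assume "z \<in> set t"
  then obtain k where k: "k < length t" "t!k = z" by (auto simp: in_set_conv_nth)
  obtain i where i: "Suc i < length t" "t!i < t!Suc i" "z = (t!i + t!Suc i)/2"
    using mids_mem[OF assms(2)] by blast
  show False
  proof (cases "k \<le> i")
    case True
    then have "t!k \<le> t!i" using sorted_nth_mono[OF assms(1)] i by simp
    then show False using i k by simp
  next
    case False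
    then have "t!Suc i \<le> t!k" using sorted_nth_mono[OF assms(1), of "Suc i" k] k by simp
    then show False using i k by simp
  qed
qed

lemma mids_Cons2: "mids (a # b # rest) = (if a < b then [(a+b)/2] else []) @ mids (b # rest)"
  by (simp add: mids_def)

lemma mids_strict:
  "sorted t \<Longrightarrow> sorted_wrt (<) (mids t) \<and> (\<forall>z\<in>set (mids t). hd t < z)"
proof (induction t rule: induct_list012)
  case 1 then show ?case by (simp add: mids_def)
next
  case (2 x) then show ?case by (simp add: mids_def)
next
  case (3 a b rest)
  then have IH: "sorted_wrt (<) (mids (b # rest))" "\<forall>z\<in>set (mids (b#rest)). b < z" and ab: "a \<le> b"
    by auto
  show ?case unfolding mids_Cons2 using IH ab
    by (auto simp: sorted_wrt_append)
qed

lemma mids_in01: "set t \<subseteq> {0..1} \<Longrightarrow> set (mids t) \<subseteq> {0..1}"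
proof
  fix z assume s: "set t \<subseteq> {0..1}" and z: "z \<in> set (mids t)"
  obtain i where i: "Suc i < length t" "z = (t!i + t!Suc i)/2"
    using mids_mem[OF z] by blast
  have "t!i \<in> set t" "t!Suc i \<in> set t" using i by auto
  then have "t!i \<in> {0..1}" "t!Suc i \<in> {0..1}" using s by auto
  then show "z \<in> {0..1}" using i by auto
qed

definition kinv :: "nat \<Rightarrow> real list \<Rightarrow> bool" where
  "kinv q t \<longleftrightarrow> sorted t \<and> set t \<subseteq> {0..1} \<and> 0 \<in> set t \<and> 1 \<in> set t \<and>
     (\<forall>x\<in>{0<..<1}. count_list t x \<le> q) \<and> q + 2 \<le> length t"

lemma count_sort: "count_list (sort xs) x = count_list xs x"
  by (metis count_mset mset_sort)

lemma length_filter_sort: "length (filter P (sort xs)) = length (filter P xs)"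
  by (metis mset_filter mset_sort size_mset)

lemma kinv_refine:
  assumes q: "1 \<le> q" and k: "kinv q t"
  shows "kinv q (refine_knots t)" "set t \<subseteq> set (refine_knots t)"
proof -
  have srt: "sorted t" using k by (simp add: kinv_def)
  have dm: "distinct (mids t)" using mids_strict[OF srt] strict_sorted_iff by blast
  have cnt: "count_list (refine_knots t) x \<le> q" if "x \<in> {0<..<1}" for x
  proof (cases "x \<in> set t")
    case True
    then have "x \<notin> set (mids t)" using mids_notin[OF srt] by blast
    then show ?thesis using k that True by (simp add: refine_eq count_sort kinv_def)
  next
    case False
    have "count_list (mids t) x \<le> 1"
      using dm by (metis count_mset distinct_count_atmost_1 order_refl zero_le_one)
    then show ?thesis using False q by (simp add: refine_eq count_sort)
  qed
  show "set t \<subseteq> set (refine_knots t)" by (simp add: refine_eq)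
  moreover have "set (refine_knots t) \<subseteq> {0..1}"
    using k mids_in01[of t] by (auto simp: refine_eq kinv_def)
  moreover have "length t \<le> length (refine_knots t)" by (simp add: refine_eq)
  ultimately show "kinv q (refine_knots t)" using k cnt
    by (auto simp: kinv_def refine_eq)
qed

lemma kinv_0:
  assumes "open_knot_vector q t" "1 \<le> q" shows "kinv q t"
proof -
  have c0: "count_list t 0 = q+1" and c1: "count_list t 1 = q+1" and s: "set t \<subseteq> {0..1}"
    and srt: "sorted t" and int: "\<forall>x\<in>{0<..<1}. count_list t x \<le> q"
    using assms by (auto simp: open_knot_vector_def)
  have i0: "0 \<in> set t" and i1: "1 \<in> set t" using c0 c1 count_list_0_iff[of t 0] count_list_0_iff[of t 1] by auto
  have "sum (count_list t) {0,1} \<le> sum (count_list t) (set t)"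
    by (rule sum_mono2) (use i0 i1 in auto)
  also have "\<dots> = length t" by (rule sum_count_set) auto
  finally have "q + 2 \<le> length t" using c0 c1 by simp
  then show ?thesis using srt s i0 i1 int by (simp add: kinv_def)
qed


lemma idx_cover:
  fixes s :: "real list" and q :: nat
  assumes srt: "sorted s" and Au: "A \<le> u" and uv: "u < v" and vB: "v \<le> B"
    and us: "u \<in> set s" and vs: "v \<in> set s"
    and mid: "card {i. i < length s \<and> u < s!i \<and> s!i < v} \<le> q"
    and full: "q + 2 \<le> card {i. i < length s \<and> A \<le> s!i \<and> s!i \<le> B}"
  shows "\<exists>l. l+q+1 < length s \<and> A \<le> s!l \<and> s!l \<le> u \<and> v \<le> s!(l+q+1) \<and> s!(l+q+1) \<le> B"
proof -
  define n where "n = length s"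
  define I1 where "I1 = {i. i<n \<and> A \<le> s!i \<and> s!i \<le> u}"
  define I2 where "I2 = {i. i<n \<and> v \<le> s!i \<and> s!i \<le> B}"
  define M where "M = {i. i < length s \<and> u < s!i \<and> s!i < v}"
  define F where "F = {i. i < length s \<and> A \<le> s!i \<and> s!i \<le> B}"
  have mono: "\<And>i j. i \<le> j \<Longrightarrow> j < n \<Longrightarrow> s!i \<le> s!j"
    using sorted_nth_mono[OF srt] n_def by blast
  have fin1: "finite I1" and fin2: "finite I2" unfolding I1_def I2_def by auto
  have ne1: "I1 \<noteq> {}" using us Au unfolding I1_def n_def by (auto simp: in_set_conv_nth)
  have ne2: "I2 \<noteq> {}" using vs vB unfolding I2_def n_def by (auto simp: in_set_conv_nth)
  define a1 where "a1 = Min I1"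
  define b1 where "b1 = Max I1"
  define a2 where "a2 = Min I2"
  define b2 where "b2 = Max I2"
  have a1: "a1 \<in> I1" "\<And>i. i \<in> I1 \<Longrightarrow> a1 \<le> i" using fin1 ne1 a1_def by auto
  have b1: "b1 \<in> I1" "\<And>i. i \<in> I1 \<Longrightarrow> i \<le> b1" using fin1 ne1 b1_def by auto
  have a2: "a2 \<in> I2" "\<And>i. i \<in> I2 \<Longrightarrow> a2 \<le> i" using fin2 ne2 a2_def by auto
  have b2: "b2 \<in> I2" "\<And>i. i \<in> I2 \<Longrightarrow> i \<le> b2" using fin2 ne2 b2_def by auto
  have ab1: "a1 \<le> b1" using a1 b1 by auto
  have ab2: "a2 \<le> b2" using a2 b2 by auto
  have b1a2: "b1 < a2"
  proof (rule ccontr)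
    assume "\<not> b1 < a2"
    then have "s!a2 \<le> s!b1" using mono b1 unfolding I1_def by auto
    then show False using a2 b1 uv unfolding I1_def I2_def by auto
  qed
  have gap: "{b1<..<a2} \<subseteq> M"
  proof
    fix i assume i: "i \<in> {b1<..<a2}"
    have ilt: "i < n" using i a2 unfolding I2_def by auto
    have "s!a1 \<le> s!i" using mono[of a1 i] ilt i ab1 by auto
    then have Ai: "A \<le> s!i" using a1 unfolding I1_def by auto
    have "s!i \<le> s!a2" using mono[of i a2] i a2 unfolding I2_def by auto
    then have iB: "s!i \<le> B" using a2 unfolding I2_def by auto
    have "u < s!i"
    proof (rule ccontr)
      assume "\<not> u < s!i"
      then have "i \<in> I1" using Ai ilt unfolding I1_def by auto
      then show False using b1 i by force
    qed
    moreover have "s!i < v"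
    proof (rule ccontr)
      assume "\<not> s!i < v"
      then have "i \<in> I2" using iB ilt unfolding I2_def by auto
      then show False using a2 i by force
    qed
    ultimately show "i \<in> M" using ilt unfolding M_def n_def by auto
  qed
  have "card {b1<..<a2} \<le> card M" by (rule card_mono[OF _ gap]) (simp add: M_def)
  then have g: "a2 \<le> b1 + q + 1" using mid M_def by simp
  have Fsub: "F \<subseteq> {a1..b2}"
  proof
    fix i assume i: "i \<in> F"
    have "a1 \<le> i"
    proof (rule ccontr)
      assume "\<not> a1 \<le> i"
      then have "s!i \<le> s!a1" using mono[of i a1] a1 unfolding I1_def by auto
      then have "i \<in> I1" using i a1 unfolding I1_def F_def n_def by auto
      then show False using a1 \<open>\<not> a1 \<le> i\<close> by auto
    qed
    moreover have "i \<le> b2"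
    proof (rule ccontr)
      assume "\<not> i \<le> b2"
      then have "s!b2 \<le> s!i" using mono[of b2 i] i unfolding F_def n_def by auto
      then have "i \<in> I2" using i b2 unfolding I2_def F_def n_def by auto
      then show False using b2 \<open>\<not> i \<le> b2\<close> by auto
    qed
    ultimately show "i \<in> {a1..b2}" by auto
  qed
  have "card F \<le> card {a1..b2}" by (rule card_mono) (auto simp: Fsub)
  then have f: "a1 + q + 1 \<le> b2" using full F_def by simp
  define l where "l = max a1 (a2 - (q+1))"
  have l1: "a1 \<le> l" "l \<le> b1" using ab1 g unfolding l_def by auto
  have l2: "a2 \<le> l+q+1" "l+q+1 \<le> b2" using f ab2 unfolding l_def by auto
  have "b2 < n" using b2 unfolding I2_def by auto
  have "A \<le> s!l" using mono[of a1 l] l1 a1 b1 unfolding I1_def by force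
  moreover have "s!l \<le> u" using mono[of l b1] l1 b1 unfolding I1_def by force
  moreover have "v \<le> s!(l+q+1)" using mono[of a2 "l+q+1"] l2 a2 b2 unfolding I2_def by force
  moreover have "s!(l+q+1) \<le> B" using mono[of "l+q+1" b2] l2 b2 unfolding I2_def by force
  ultimately show ?thesis using \<open>b2 < n\<close> l2 n_def by (intro exI[of _ l]) auto
qed


lemma cover1:
  fixes t :: "real list" and q :: nat
  assumes ki: "kinv q t" and As: "A \<in> set t" and Bs: "B \<in> set t"
    and h1: "A \<le> x" "x < y" "y \<le> B" and h2: "A \<le> x'" "x' < y'" "y' \<le> B"
    and nz1: "\<forall>z\<in>set t. \<not> (x < z \<and> z < y)" and nz2: "\<forall>z\<in>set t. \<not> (x' < z \<and> z < y')"
    and int: "max x x' \<le> min y y'"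
    and full: "q + 2 \<le> card {i. i < length t \<and> A \<le> t!i \<and> t!i \<le> B}"
  shows "\<exists>l. l+q+1 < length t \<and> A \<le> t!l \<and> t!l \<le> min x x' \<and> max y y' \<le> t!(l+q+1) \<and> t!(l+q+1) \<le> B"
proof -
  have srt: "sorted t" and s01: "set t \<subseteq> {0..1}" and cnt: "\<forall>w\<in>{0<..<1}. count_list t w \<le> q"
    using ki by (auto simp: kinv_def)
  define U where "U = {z\<in>set t. z \<le> min x x'}"
  define V where "V = {z\<in>set t. max y y' \<le> z}"
  define u where "u = Max U"
  define v where "v = Min V"
  have AU: "A \<in> U" using As h1 h2 by (simp add: U_def)
  have BV: "B \<in> V" using Bs h1 h2 by (simp add: V_def)
  have fU: "finite U" and fV: "finite V" by (auto simp: U_def V_def)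
  have u: "u \<in> U" "\<And>z. z \<in> U \<Longrightarrow> z \<le> u" using fU AU u_def by (auto intro: Max_in)
  have v: "v \<in> V" "\<And>z. z \<in> V \<Longrightarrow> v \<le> z" using fV BV v_def by (auto intro: Min_in)
  have uset: "u \<in> set t" and umin: "u \<le> min x x'" using u by (auto simp: U_def)
  have vset: "v \<in> set t" and vmax: "max y y' \<le> v" using v by (auto simp: V_def)
  have Au: "A \<le> u" using u AU by auto
  have vB: "v \<le> B" using v BV by auto
  have uv: "u < v" using umin vmax h1 h2 by linarith
  define w where "w = (if x \<le> x' then y else y')"
  have onlyw: "z = w" if z: "z \<in> set t" "u < z" "z < v" for z
  proof -
    have a: "\<not> z \<le> min x x'" using u(2)[of z] z by (auto simp: U_def)
    have b: "\<not> max y y' \<le> z" using v(2)[of z] z by (auto simp: V_def)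
    have c: "\<not> (x < z \<and> z < y)" "\<not> (x' < z \<and> z < y')" using nz1 nz2 z by auto
    show ?thesis using a b c int h1 h2 unfolding w_def by (auto simp: min_def max_def split: if_splits)
  qed
  have mid: "card {i. i < length t \<and> u < t!i \<and> t!i < v} \<le> q"
  proof (cases "{i. i < length t \<and> u < t!i \<and> t!i < v} = {}")
    case True then show ?thesis by (simp only: card.empty)
  next
    case False
    then obtain i where i: "i < length t" "u < t!i" "t!i < v" by auto
    have tiw: "t!i = w" using onlyw[of "t!i"] i by auto
    have "0 \<le> u" "v \<le> 1" using uset vset s01 by auto
    then have w01: "w \<in> {0<..<1}" using i tiw by auto
    have sub: "{i. i < length t \<and> u < t!i \<and> t!i < v} \<subseteq> {i. i < length t \<and> w = t!i}"
      using onlyw nth_mem by fastforce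
    have "card {i. i < length t \<and> u < t!i \<and> t!i < v} \<le> card {i. i < length t \<and> w = t!i}"
      by (rule card_mono[OF _ sub]) simp
    also have "\<dots> = count_list t w"
      by (simp add: count_list_eq_length_filter length_filter_conv_card)
    also have "\<dots> \<le> q" using cnt w01 by auto
    finally show ?thesis .
  qed
  obtain l where l: "l+q+1 < length t" "A \<le> t!l" "t!l \<le> u" "v \<le> t!(l+q+1)" "t!(l+q+1) \<le> B"
    using idx_cover[OF srt Au uv vB uset vset mid full] by blast
  show ?thesis using l umin vmax by (intro exI[of _ l]) auto
qed


lemma bspl_basic:
  "sorted t \<Longrightarrow> j+q+1 < length t \<Longrightarrow>
     0 \<le> bspl t q j x \<and> (bspl t q j x \<noteq> 0 \<longrightarrow> t!j \<le> x \<and> x < t!(j+q+1))"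
proof (induction q arbitrary: j)
  case 0 then show ?case by simp
next
  case (Suc q)
  have mono: "\<And>a b. a \<le> b \<Longrightarrow> b < length t \<Longrightarrow> t!a \<le> t!b"
    using sorted_nth_mono[OF Suc.prems(1)] by blast
  have i1: "j+q+1 < length t" and i2: "(j+1)+q+1 < length t" using Suc.prems by auto
  note IH1 = Suc.IH[OF Suc.prems(1) i1] and IH2 = Suc.IH[OF Suc.prems(1) i2]
  define B1 where "B1 = bspl t q j x"
  define B2 where "B2 = bspl t q (j+1) x"
  have e: "bspl t (Suc q) j x = (x - t!j) / (t!(j+q+1) - t!j) * B1
         + (t!(j+q+2) - x) / (t!(j+q+2) - t!(j+1)) * B2"
    by (simp add: B1_def B2_def)
  have m1: "t!j \<le> t!(j+q+1)" "t!(j+1) \<le> t!(j+q+2)" "t!j \<le> t!(j+1)" "t!(j+q+1) \<le> t!(j+q+2)"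
    using mono Suc.prems by auto
  have T1: "0 \<le> (x - t!j) / (t!(j+q+1) - t!j) * B1"
  proof (cases "B1 = 0")
    case False
    then have "t!j \<le> x" "0 \<le> B1" using IH1 B1_def by auto
    then show ?thesis using m1 by (intro mult_nonneg_nonneg divide_nonneg_nonneg) auto
  qed simp
  have T2: "0 \<le> (t!(j+q+2) - x) / (t!(j+q+2) - t!(j+1)) * B2"
  proof (cases "B2 = 0")
    case False
    then have "x < t!(j+q+2)" "0 \<le> B2" using IH2 B2_def by (auto simp: add.commute add.left_commute)
    then show ?thesis using m1 by (intro mult_nonneg_nonneg divide_nonneg_nonneg) auto
  qed simp
  have Z: "t!j \<le> x \<and> x < t!(j+q+2)" if nz: "bspl t (Suc q) j x \<noteq> 0"
  proof (cases "B1 = 0")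
    case False
    then show ?thesis using IH1 B1_def m1 by auto
  next
    case True
    then have "B2 \<noteq> 0" using nz e by auto
    then have "t!(j+1) \<le> x" "x < t!(j+q+2)" using IH2 B2_def by (auto simp: add.commute add.left_commute)
    then show ?thesis using m1 by auto
  qed
  show ?case using T1 T2 e Z by auto
qed

lemma bspl_pos:
  "sorted t \<Longrightarrow> j+q+1 < length t \<Longrightarrow> t!j < x \<Longrightarrow> x < t!(j+q+1) \<Longrightarrow> x \<notin> set t \<Longrightarrow>
     0 < bspl t q j x"
proof (induction q arbitrary: j)
  case 0 then show ?case by simp
next
  case (Suc q)
  have mono: "\<And>a b. a \<le> b \<Longrightarrow> b < length t \<Longrightarrow> t!a \<le> t!b"
    using sorted_nth_mono[OF Suc.prems(1)] by blast
  have i1: "j+q+1 < length t" and i2: "(j+1)+q+1 < length t" using Suc.prems by auto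
  define B1 where "B1 = bspl t q j x"
  define B2 where "B2 = bspl t q (j+1) x"
  have e: "bspl t (Suc q) j x = (x - t!j) / (t!(j+q+1) - t!j) * B1
         + (t!(j+q+2) - x) / (t!(j+q+2) - t!(j+1)) * B2"
    by (simp add: B1_def B2_def)
  have m1: "t!j \<le> t!(j+q+1)" "t!(j+1) \<le> t!(j+q+2)" "t!j \<le> t!(j+1)" "t!(j+q+1) \<le> t!(j+q+2)"
    using mono Suc.prems by auto
  have b1: "0 \<le> B1" using bspl_basic[OF Suc.prems(1) i1] B1_def by auto
  have b2: "0 \<le> B2" using bspl_basic[OF Suc.prems(1) i2] B2_def by auto
  have xs: "x < t!(j+q+2)" using Suc.prems by simp
  have T1: "0 \<le> (x - t!j) / (t!(j+q+1) - t!j) * B1"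
    using b1 m1 Suc.prems by (intro mult_nonneg_nonneg divide_nonneg_nonneg) auto
  have T2: "0 \<le> (t!(j+q+2) - x) / (t!(j+q+2) - t!(j+1)) * B2"
    using b2 m1 xs by (intro mult_nonneg_nonneg divide_nonneg_nonneg) auto
  show ?case
  proof (cases "x < t!(j+q+1)")
    case True
    have "0 < B1" using Suc.IH[OF Suc.prems(1) i1 Suc.prems(3) True Suc.prems(5)] B1_def by simp
    then have "0 < (x - t!j) / (t!(j+q+1) - t!j) * B1" using True Suc.prems
      by (intro mult_pos_pos divide_pos_pos) auto
    then show ?thesis using e T2 by linarith
  next
    case False
    have "x \<noteq> t!(j+q+1)" using Suc.prems i1 nth_mem by blast
    moreover have "t!(j+1) \<le> t!(j+q+1)" using mono i1 by auto
    ultimately have gt: "t!(j+1) < x" using False by auto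
    have "0 < B2" using Suc.IH[OF Suc.prems(1) i2 gt] xs Suc.prems(5) B2_def
      by (simp add: add.commute add.left_commute)
    then have "0 < (t!(j+q+2) - x) / (t!(j+q+2) - t!(j+1)) * B2" using xs gt
      by (intro mult_pos_pos divide_pos_pos) auto
    then show ?thesis using e T1 by linarith
  qed
qed

lemma dense1:
  fixes lo hi y d :: real
  assumes "lo \<le> y" "y \<le> hi" "lo < hi" "finite F" "0 < d"
  shows "\<exists>x. lo < x \<and> x < hi \<and> x \<notin> F \<and> \<bar>x - y\<bar> < d"
proof -
  define a where "a = max lo (y - d)"
  define b where "b = min hi (y + d)"
  have "a < b" using assms unfolding a_def b_def by auto
  then have "infinite {a<..<b}" by simp
  then have "infinite ({a<..<b} - F)" using assms(4) Diff_infinite_finite by blast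
  then obtain x where "x \<in> {a<..<b} - F" using infinite_imp_nonempty by blast
  then show ?thesis unfolding a_def b_def by (intro exI[of _ x]) auto
qed

lemma supp_sub:
  fixes t :: "'n::finite \<Rightarrow> real list" and q J :: "'n \<Rightarrow> nat"
  assumes "\<forall>i. sorted (t i)" "\<forall>i. J i + q i + 1 < length (t i)"
  shows "supp (\<lambda>x. \<Prod>i\<in>UNIV. bspl (t i) (q i) (J i) (x $ i))
     \<subseteq> cbox (\<chi> i. t i ! J i) (\<chi> i. t i ! (J i + q i + 1))"
  unfolding supp_def
proof (rule closure_minimal)
  show "closed (cbox (\<chi> i. t i ! J i) (\<chi> i. t i ! (J i + q i + 1)))" by (rule closed_cbox)
  show "{x. (\<Prod>i\<in>UNIV. bspl (t i) (q i) (J i) (x $ i)) \<noteq> 0}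
      \<subseteq> cbox (\<chi> i. t i ! J i) (\<chi> i. t i ! (J i + q i + 1))"
  proof
    fix x assume "x \<in> {x. (\<Prod>i\<in>UNIV. bspl (t i) (q i) (J i) (x $ i)) \<noteq> 0}"
    then have "\<forall>i. bspl (t i) (q i) (J i) (x $ i) \<noteq> 0" by auto
    then show "x \<in> cbox (\<chi> i. t i ! J i) (\<chi> i. t i ! (J i + q i + 1))"
      using bspl_basic assms by (auto simp: mem_box_cart) (meson less_imp_le)+
  qed
qed

lemma supp_sup:
  fixes t :: "'n::finite \<Rightarrow> real list" and q J :: "'n \<Rightarrow> nat"
  assumes srt: "\<forall>i. sorted (t i)" and len: "\<forall>i. J i + q i + 1 < length (t i)"
    and nd: "\<forall>i. t i ! J i < t i ! (J i + q i + 1)"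
  shows "cbox (\<chi> i. t i ! J i) (\<chi> i. t i ! (J i + q i + 1))
     \<subseteq> supp (\<lambda>x. \<Prod>i\<in>UNIV. bspl (t i) (q i) (J i) (x $ i))"
proof
  fix y assume y: "y \<in> cbox (\<chi> i. t i ! J i) (\<chi> i. t i ! (J i + q i + 1))"
  then have yi: "\<forall>i. t i ! J i \<le> y$i \<and> y$i \<le> t i ! (J i + q i + 1)" by (simp add: mem_box_cart)
  show "y \<in> supp (\<lambda>x. \<Prod>i\<in>UNIV. bspl (t i) (q i) (J i) (x $ i))"
    unfolding supp_def closure_approachable
  proof (intro allI impI)
    fix e :: real assume e: "0 < e"
    define d where "d = e / real CARD('n)"
    have d: "0 < d" using e by (simp add: d_def)
    have "\<forall>i. \<exists>z. t i ! J i < z \<and> z < t i ! (J i + q i + 1) \<and> z \<notin> set (t i) \<and> \<bar>z - y$i\<bar> < d"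
      using dense1 yi nd d by blast
    then obtain f where f: "\<forall>i. t i ! J i < f i \<and> f i < t i ! (J i + q i + 1) \<and> f i \<notin> set (t i) \<and> \<bar>f i - y$i\<bar> < d"
      by metis
    define x where "x = (\<chi> i. f i)"
    have "\<forall>i. 0 < bspl (t i) (q i) (J i) (x $ i)"
      using bspl_pos srt len f unfolding x_def by auto
    then have "(\<Prod>i\<in>UNIV. bspl (t i) (q i) (J i) (x $ i)) \<noteq> 0"
      by (metis (no_types, lifting) less_irrefl prod_pos)
    moreover have "dist x y < e"
    proof -
      have "dist x y = norm (x - y)" by (simp add: dist_norm)
      also have "\<dots> \<le> (\<Sum>i\<in>UNIV. \<bar>(x - y)$i\<bar>)" by (rule norm_le_l1_cart)
      also have "\<dots> < (\<Sum>i\<in>(UNIV::'n set). d)"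
        by (rule sum_strict_mono) (use f in \<open>auto simp: x_def\<close>)
      also have "\<dots> = e" by (simp add: d_def)
      finally show ?thesis .
    qed
    ultimately show "\<exists>x\<in>{x. (\<Prod>i\<in>UNIV. bspl (t i) (q i) (J i) (x $ i)) \<noteq> 0}. dist x y < e"
      by blast
  qed
qed


lemma knots_Suc: "knots K0 (Suc k) i = refine_knots (knots K0 k i)"
  by (simp add: knots_def)

lemma kinv_lev:
  assumes "\<forall>i. 1 \<le> p i" "\<forall>i. open_knot_vector (p i) (K0 i)"
  shows "kinv (p i) (knots K0 k i)"
proof (induction k)
  case 0 then show ?case using kinv_0 assms by (simp add: knots_def)
next
  case (Suc k) then show ?case using kinv_refine(1) assms by (simp add: knots_Suc)
qed

lemma knots_sub:
  assumes "\<forall>i. 1 \<le> p i" "\<forall>i. open_knot_vector (p i) (K0 i)" "j \<le> k"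
  shows "set (knots K0 j i) \<subseteq> set (knots K0 k i)"
  using assms(3)
proof (induction k rule: dec_induct)
  case base then show ?case by simp
next
  case (step k) then show ?case
    using kinv_refine(2)[OF _ kinv_lev[OF assms(1,2)]] assms(1) by (force simp: knots_Suc)
qed

lemma card_refine:
  "card {r. r < length t \<and> P (t!r)} \<le> card {r. r < length (refine_knots t) \<and> P (refine_knots t ! r)}"
  by (simp only: length_filter_conv_card[symmetric]) (simp add: refine_eq length_filter_sort)

lemma cell_props:
  assumes "T \<in> cells K0 k" "\<forall>i. sorted (knots K0 k i)"
  shows "\<exists>a b. T = cbox a b \<and> (\<forall>i. a$i < b$i \<and>
           (\<forall>z\<in>set (knots K0 k i). \<not> (a$i < z \<and> z < b$i)))"
proof -
  obtain a b where T: "T = cbox a b" and h: "\<forall>i. \<exists>m. m + 1 < length (knots K0 k i) \<and>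
          a $ i = knots K0 k i ! m \<and> b $ i = knots K0 k i ! (m + 1) \<and> a $ i < b $ i"
    using assms(1) unfolding cells_def by blast
  have "\<forall>i. a$i < b$i \<and> (\<forall>z\<in>set (knots K0 k i). \<not> (a$i < z \<and> z < b$i))"
  proof
    fix i
    obtain m where m: "m + 1 < length (knots K0 k i)" "a $ i = knots K0 k i ! m"
      "b $ i = knots K0 k i ! (m + 1)" "a $ i < b $ i" using h by blast
    have nz: "\<not> (a$i < z \<and> z < b$i)" if z: "z \<in> set (knots K0 k i)" for z
    proof -
      obtain r where r: "r < length (knots K0 k i)" "z = knots K0 k i ! r"
        using z by (auto simp: in_set_conv_nth)
      show ?thesis
      proof (cases "r \<le> m")
        case True then show ?thesis using sorted_nth_mono[OF assms(2)[rule_format, of i], of r m] m r by auto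
      next
        case False then show ?thesis
          using sorted_nth_mono[OF assms(2)[rule_format, of i], of "m+1" r] m r by auto
      qed
    qed
    show "a$i < b$i \<and> (\<forall>z\<in>set (knots K0 k i). \<not> (a$i < z \<and> z < b$i))" using m nz by blast
  qed
  then show ?thesis using T by blast
qed

lemma Omega_anti:
  assumes "hier_domains K0 \<Omega>" "j \<le> k" shows "\<Omega> k \<subseteq> \<Omega> j"
  using assms(2)
proof (induction k rule: dec_induct)
  case base then show ?case by simp
next
  case (step k) then show ?case using assms(1) unfolding hier_domains_def by blast
qed


lemma box_sub_cart:
  fixes a b c d :: "real^'n"
  assumes "\<forall>i. c$i \<le> a$i \<and> b$i \<le> d$i"
  shows "cbox a b \<subseteq> cbox c d"
  using assms by (auto simp: mem_box_cart) (meson order_trans)+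

lemma box_sub_cart_D:
  fixes a b c d :: "real^'n"
  assumes "cbox a b \<subseteq> cbox c d" "\<forall>i. a$i < b$i"
  shows "\<forall>i. c$i \<le> a$i \<and> b$i \<le> d$i"
proof -
  have "a \<in> cbox a b" "b \<in> cbox a b" using assms(2) by (auto simp: mem_box_cart less_imp_le)
  then have "a \<in> cbox c d" "b \<in> cbox c d" using assms(1) by auto
  then show ?thesis by (simp add: mem_box_cart)
qed

lemma cover_nd:
  fixes p :: "'n::finite \<Rightarrow> nat" and K0 :: "'n \<Rightarrow> real list" and a b a' b' A B :: "real^'n"
  assumes pos: "\<forall>i. 1 \<le> p i" and okv: "\<forall>i. open_knot_vector (p i) (K0 i)"
    and ab: "\<forall>i. a$i < b$i" and ab': "\<forall>i. a'$i < b'$i"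
    and nz1: "\<forall>i. \<forall>z\<in>set (knots K0 j i). \<not> (a$i < z \<and> z < b$i)"
    and nz2: "\<forall>i. \<forall>z\<in>set (knots K0 j i). \<not> (a'$i < z \<and> z < b'$i)"
    and int: "cbox a b \<inter> cbox a' b' \<noteq> {}"
    and As: "\<forall>i. A$i \<in> set (knots K0 j i)" and Bs: "\<forall>i. B$i \<in> set (knots K0 j i)"
    and sub1: "cbox a b \<subseteq> cbox A B" and sub2: "cbox a' b' \<subseteq> cbox A B"
    and full: "\<forall>i. p i + 2 \<le> card {r. r < length (knots K0 j i) \<and> A$i \<le> knots K0 j i ! r \<and> knots K0 j i ! r \<le> B$i}"
  shows "\<exists>\<beta>\<in>bsplines p K0 j. cbox a b \<subseteq> supp \<beta> \<and> cbox a' b' \<subseteq> supp \<beta> \<and> supp \<beta> \<subseteq> cbox A B"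
proof -
  define t where "t = knots K0 j"
  have ki: "\<forall>i. kinv (p i) (t i)" using kinv_lev[OF pos okv] t_def by blast
  have srt: "\<forall>i. sorted (t i)" using ki by (simp add: kinv_def)
  have s1: "\<forall>i. A$i \<le> a$i \<and> b$i \<le> B$i" using box_sub_cart_D[OF sub1 ab] .
  have s2: "\<forall>i. A$i \<le> a'$i \<and> b'$i \<le> B$i" using box_sub_cart_D[OF sub2 ab'] .
  obtain z where z: "z \<in> cbox a b" "z \<in> cbox a' b'" using int by blast
  have mm: "\<forall>i. max (a$i) (a'$i) \<le> min (b$i) (b'$i)" using z by (auto simp: mem_box_cart) (meson order_trans)+
  have "\<forall>i. \<exists>l. l + p i + 1 < length (t i) \<and> A$i \<le> t i ! l \<and> t i ! l \<le> min (a$i) (a'$i)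
           \<and> max (b$i) (b'$i) \<le> t i ! (l + p i + 1) \<and> t i ! (l + p i + 1) \<le> B$i"
  proof
    fix i
    show "\<exists>l. l + p i + 1 < length (t i) \<and> A$i \<le> t i ! l \<and> t i ! l \<le> min (a$i) (a'$i)
           \<and> max (b$i) (b'$i) \<le> t i ! (l + p i + 1) \<and> t i ! (l + p i + 1) \<le> B$i"
      using cover1[OF ki[rule_format, of i], of "A$i" "B$i" "a$i" "b$i" "a'$i" "b'$i"]
        As Bs s1 s2 ab ab' nz1 nz2 mm full unfolding t_def by blast
  qed
  then obtain L where L: "\<forall>i. L i + p i + 1 < length (t i) \<and> A$i \<le> t i ! L i \<and> t i ! L i \<le> min (a$i) (a'$i)
           \<and> max (b$i) (b'$i) \<le> t i ! (L i + p i + 1) \<and> t i ! (L i + p i + 1) \<le> B$i"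
    by metis
  define \<beta> where "\<beta> = (\<lambda>x. \<Prod>i\<in>UNIV. bspl (t i) (p i) (L i) (x $ i))"
  have bs: "\<beta> \<in> bsplines p K0 j" unfolding bsplines_def \<beta>_def t_def
    using L unfolding t_def by blast
  have len: "\<forall>i. L i + p i + 1 < length (t i)" using L by blast
  have nd: "\<forall>i. t i ! L i < t i ! (L i + p i + 1)"
  proof
    fix i show "t i ! L i < t i ! (L i + p i + 1)" using L[rule_format, of i] ab[rule_format, of i] by linarith
  qed
  have supp: "supp \<beta> = cbox (\<chi> i. t i ! L i) (\<chi> i. t i ! (L i + p i + 1))"
    using supp_sub[OF srt len] supp_sup[OF srt len nd] unfolding \<beta>_def by blast
  have "cbox a b \<subseteq> supp \<beta>" unfolding supp by (rule box_sub_cart) (use L in auto)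
  moreover have "cbox a' b' \<subseteq> supp \<beta>" unfolding supp by (rule box_sub_cart) (use L in auto)
  moreover have "supp \<beta> \<subseteq> cbox A B" unfolding supp by (rule box_sub_cart) (use L in auto)
  ultimately show ?thesis using bs by blast
qed


theorem lemma5p3:
  fixes p :: "'n::finite \<Rightarrow> nat"
    and K0 :: "'n \<Rightarrow> real list"
    and \<Omega> :: "nat \<Rightarrow> (real^'n) set"
    and T :: "(real^'n) set"
  assumes "CARD('n) \<ge> 2"
    and "\<forall>i. p i \<ge> 1"
    and "\<forall>i. open_knot_vector (p i) (K0 i)"
    and "hier_domains K0 \<Omega>"
    and "T \<in> hmesh K0 \<Omega>"
  shows "touching K0 \<Omega> T \<subseteq> neighbors p K0 \<Omega> T"
proof
  fix T' assume "T' \<in> touching K0 \<Omega> T"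
  then have T'm: "T' \<in> hmesh K0 \<Omega>" and TT: "T' \<inter> T \<noteq> {}" by (auto simp: touching_def)
  have pos: "\<forall>i. 1 \<le> p i" using assms(2) by blast
  note okv = assms(3)
  have hd: "hier_domains K0 \<Omega>" by (rule assms(4))
  obtain k where kT: "T \<in> cells K0 k" "T \<subseteq> \<Omega> k" "\<not> T \<subseteq> \<Omega> (Suc k)"
    using assms(5) unfolding hmesh_def by blast
  obtain k' where kT': "T' \<in> cells K0 k'" "T' \<subseteq> \<Omega> k'" "\<not> T' \<subseteq> \<Omega> (Suc k')"
    using T'm unfolding hmesh_def by blast
  have srt: "\<And>j. \<forall>i. sorted (knots K0 j i)" using kinv_lev[OF pos okv] by (simp add: kinv_def)
  obtain a b where T: "T = cbox a b" and ab: "\<forall>i. a$i < b$i"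
    and nzk: "\<forall>i. \<forall>z\<in>set (knots K0 k i). \<not> (a$i < z \<and> z < b$i)"
    using cell_props[OF kT(1) srt] by blast
  obtain a' b' where T': "T' = cbox a' b'" and ab': "\<forall>i. a'$i < b'$i"
    and nzk': "\<forall>i. \<forall>z\<in>set (knots K0 k' i). \<not> (a'$i < z \<and> z < b'$i)"
    using cell_props[OF kT'(1) srt] by blast
  have nzj: "\<forall>i. \<forall>z\<in>set (knots K0 j i). \<not> (a$i < z \<and> z < b$i)" if "j \<le> k" for j
    using nzk knots_sub[OF pos okv that] by blast
  have nzj': "\<forall>i. \<forall>z\<in>set (knots K0 j i). \<not> (a'$i < z \<and> z < b'$i)" if "j \<le> k'" for j
    using nzk' knots_sub[OF pos okv that] by blast
  have "a \<in> cbox a b" using ab by (auto simp: mem_box_cart less_imp_le)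
  then have Tne: "T \<noteq> {}" using T by blast
  have int: "cbox a b \<inter> cbox a' b' \<noteq> {}" using TT T T' by blast
  define Q where "Q j \<longleftrightarrow> (\<exists>\<beta>\<in>bsplines p K0 j. T \<subseteq> supp \<beta> \<and> T' \<subseteq> supp \<beta> \<and> supp \<beta> \<subseteq> \<Omega> j)" for j
  have O0: "\<Omega> 0 = cbox 0 1" using hd by (simp add: hier_domains_def)
  have Q0: "Q 0"
  proof -
    have s1: "cbox a b \<subseteq> cbox 0 1" using Omega_anti[OF hd, of 0 k] kT O0 T by auto
    have s2: "cbox a' b' \<subseteq> cbox 0 1" using Omega_anti[OF hd, of 0 k'] kT' O0 T' by auto
    have As: "\<forall>i. (0::real^'n)$i \<in> set (knots K0 0 i)" and Bs: "\<forall>i. (1::real^'n)$i \<in> set (knots K0 0 i)"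
      using kinv_lev[OF pos okv] by (auto simp: kinv_def)
    have full: "\<forall>i. p i + 2 \<le> card {r. r < length (knots K0 0 i) \<and> (0::real^'n)$i \<le> knots K0 0 i ! r \<and> knots K0 0 i ! r \<le> (1::real^'n)$i}"
    proof
      fix i
      have ki: "kinv (p i) (knots K0 0 i)" using kinv_lev[OF pos okv] by blast
      have "{r. r < length (knots K0 0 i) \<and> (0::real^'n)$i \<le> knots K0 0 i ! r \<and> knots K0 0 i ! r \<le> (1::real^'n)$i}
          = {..<length (knots K0 0 i)}"
      proof -
        have "\<forall>r < length (knots K0 0 i). knots K0 0 i ! r \<in> {0..1}"
          using ki nth_mem unfolding kinv_def by blast
        then show ?thesis by auto
      qed
      then show "p i + 2 \<le> card {r. r < length (knots K0 0 i) \<and> (0::real^'n)$i \<le> knots K0 0 i ! r \<and> knots K0 0 i ! r \<le> (1::real^'n)$i}"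
        using ki by (simp add: kinv_def)
    qed
    obtain \<beta> where "\<beta>\<in>bsplines p K0 0" "cbox a b \<subseteq> supp \<beta>" "cbox a' b' \<subseteq> supp \<beta>" "supp \<beta> \<subseteq> cbox 0 1"
      using cover_nd[OF pos okv ab ab' nzj[of 0] nzj'[of 0] int As Bs s1 s2 full] by blast
    then show ?thesis unfolding Q_def using T T' O0 by auto
  qed
  obtain N where N: "\<forall>j\<ge>N. \<Omega> j = {}" using hd unfolding hier_domains_def by blast
  have bnd: "j < N" if "Q j" for j
  proof (rule ccontr)
    assume "\<not> j < N"
    then have "\<Omega> j = {}" using N by auto
    then show False using that Tne unfolding Q_def by blast
  qed
  have finQ: "finite {j. Q j}" unfolding finite_nat_set_iff_bounded using bnd by blast
  define j0 where "j0 = Max {j. Q j}"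
  have Qj0: "Q j0" using finQ Q0 Max_in[OF finQ] j0_def by blast
  have maxj0: "\<And>j. Q j \<Longrightarrow> j \<le> j0" using finQ j0_def by auto
  obtain \<beta> where \<beta>: "\<beta>\<in>bsplines p K0 j0" "T \<subseteq> supp \<beta>" "T' \<subseteq> supp \<beta>" "supp \<beta> \<subseteq> \<Omega> j0"
    using Qj0 unfolding Q_def by blast
  have notsub: "\<not> supp \<beta> \<subseteq> \<Omega> (Suc j0)"
  proof
    assume H: "supp \<beta> \<subseteq> \<Omega> (Suc j0)"
    have jk: "Suc j0 \<le> k"
    proof (rule ccontr)
      assume "\<not> Suc j0 \<le> k"
      then have "\<Omega> (Suc j0) \<subseteq> \<Omega> (Suc k)" using Omega_anti[OF hd] by auto
      then show False using H \<beta>(2) kT(3) by blast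
    qed
    have jk': "Suc j0 \<le> k'"
    proof (rule ccontr)
      assume "\<not> Suc j0 \<le> k'"
      then have "\<Omega> (Suc j0) \<subseteq> \<Omega> (Suc k')" using Omega_anti[OF hd] by auto
      then show False using H \<beta>(3) kT'(3) by blast
    qed
    define t where "t = knots K0 j0"
    obtain J where J: "\<forall>i. J i + p i + 1 < length (t i)"
      and \<beta>eq: "\<beta> = (\<lambda>x. \<Prod>i\<in>UNIV. bspl (t i) (p i) (J i) (x $ i))"
      using \<beta>(1) unfolding bsplines_def t_def by blast
    define lo :: "real^'n" where "lo = (\<chi> i. t i ! J i)"
    define hi :: "real^'n" where "hi = (\<chi> i. t i ! (J i + p i + 1))"
    have srtt: "\<forall>i. sorted (t i)" using srt t_def by blast
    have ss: "supp \<beta> \<subseteq> cbox lo hi" using supp_sub[OF srtt J] \<beta>eq lo_def hi_def by simp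
    have Tlh: "cbox a b \<subseteq> cbox lo hi" using ss \<beta>(2) T by blast
    have T'lh: "cbox a' b' \<subseteq> cbox lo hi" using ss \<beta>(3) T' by blast
    have lh: "\<forall>i. lo$i \<le> a$i \<and> b$i \<le> hi$i" using box_sub_cart_D[OF Tlh ab] .
    have nd: "\<forall>i. t i ! J i < t i ! (J i + p i + 1)"
    proof
      fix i show "t i ! J i < t i ! (J i + p i + 1)"
        using lh[rule_format, of i] ab[rule_format, of i] by (simp add: lo_def hi_def)
    qed
    have suppeq: "supp \<beta> = cbox lo hi"
      using ss supp_sup[OF srtt J nd] \<beta>eq lo_def hi_def by auto
    have sub01: "set (t i) \<subseteq> set (knots K0 (Suc j0) i)" for i
      using knots_sub[OF pos okv, of j0 "Suc j0" i] t_def by simp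
    have As: "\<forall>i. lo$i \<in> set (knots K0 (Suc j0) i)"
    proof
      fix i have "J i < length (t i)" using J[rule_format, of i] by linarith
      then have "t i ! J i \<in> set (t i)" by (rule nth_mem)
      then show "lo$i \<in> set (knots K0 (Suc j0) i)" using sub01 by (auto simp: lo_def)
    qed
    have Bs: "\<forall>i. hi$i \<in> set (knots K0 (Suc j0) i)"
    proof
      fix i have "J i + p i + 1 < length (t i)" using J by blast
      then have "t i ! (J i + p i + 1) \<in> set (t i)" by (rule nth_mem)
      then show "hi$i \<in> set (knots K0 (Suc j0) i)" using sub01 by (auto simp: hi_def)
    qed
    have full: "\<forall>i. p i + 2 \<le> card {r. r < length (knots K0 (Suc j0) i) \<and> lo$i \<le> knots K0 (Suc j0) i ! r \<and> knots K0 (Suc j0) i ! r \<le> hi$i}"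
    proof
      fix i
      have "{J i..J i + p i + 1} \<subseteq> {r. r < length (t i) \<and> lo$i \<le> t i ! r \<and> t i ! r \<le> hi$i}"
      proof
        fix r assume r: "r \<in> {J i..J i + p i + 1}"
        have "r < length (t i)" using r J[rule_format, of i] by auto
        moreover have "t i ! J i \<le> t i ! r" "t i ! r \<le> t i ! (J i + p i + 1)"
          using r J[rule_format, of i] sorted_nth_mono[OF srtt[rule_format, of i]] by auto
        ultimately show "r \<in> {r. r < length (t i) \<and> lo$i \<le> t i ! r \<and> t i ! r \<le> hi$i}"
          by (simp add: lo_def hi_def)
      qed
      then have "card {J i..J i + p i + 1} \<le> card {r. r < length (t i) \<and> lo$i \<le> t i ! r \<and> t i ! r \<le> hi$i}"
        by (rule card_mono[rotated]) simp
      also have "\<dots> \<le> card {r. r < length (knots K0 (Suc j0) i) \<and> lo$i \<le> knots K0 (Suc j0) i ! r \<and> knots K0 (Suc j0) i ! r \<le> hi$i}"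
        using card_refine[of "t i" "\<lambda>z. lo$i \<le> z \<and> z \<le> hi$i"] by (simp add: t_def knots_Suc)
      finally show "p i + 2 \<le> card {r. r < length (knots K0 (Suc j0) i) \<and> lo$i \<le> knots K0 (Suc j0) i ! r \<and> knots K0 (Suc j0) i ! r \<le> hi$i}"
        by simp
    qed
    obtain \<beta>' where \<beta>': "\<beta>'\<in>bsplines p K0 (Suc j0)" "cbox a b \<subseteq> supp \<beta>'" "cbox a' b' \<subseteq> supp \<beta>'" "supp \<beta>' \<subseteq> cbox lo hi"
      using cover_nd[OF pos okv ab ab' nzj[OF jk] nzj'[OF jk'] int As Bs Tlh T'lh full] by blast
    have "Q (Suc j0)" unfolding Q_def using \<beta>' T T' suppeq H by blast
    then show False using maxj0 by fastforce
  qed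
  have "\<beta> \<in> hbasis p K0 \<Omega>" unfolding hbasis_def using \<beta>(1,4) notsub by blast
  then show "T' \<in> neighbors p K0 \<Omega> T" unfolding neighbors_def using T'm \<beta>(2,3) by blast
qed

end
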